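(* Let $\alpha$ be a composition, $w\in CRHW_n$ with $w(\alpha)=\beta\neq0$, $\tau=\tau_w$, and let $j\ge1$ belong to $\mathrm{supp}(w)$ but not be its maximum. If $j\in\mathrm{leg}(w)$, then (i) the greatest entry of $\tau$ in column $j$ is strictly greater than the greatest entry of $\tau$ in column $j+1$, and (ii) every other entry of $\tau$ in column $j$ is strictly smaller than the smallest entry of $\tau$ in column $j+1$.
   Context: Box-adding operators on compositions $\alpha=(\alpha_1,\dots,\alpha_k)$: $\mathfrak t_1(\alpha)=(1,\alpha_1,\dots,\alpha_k)$ (a new row on top); for $i\ge2$, $\mathfrak t_i(\alpha)$ increases the leftmost part equal to $i-1$ by $1$ (adding a box in column $i$), and is $0$ if there is no such part; $\mathfrak t_i(0)=0$. Diagrams: row $i$ has $\alpha_i$ left-justified boxes, rows numbered top to bottom. A word $w=\mathfrak t_{i_1}\cdots\mathfrak t_{i_n}$ acts by $w(\alpha)=\mathfrak t_{i_1}(\cdots\mathfrak t_{i_n}(\alpha))$. It is a reverse $k$-hookword if $i_1\le\cdots\le i_{k+1}>i_{k+2}>\cdots>i_n$ ($0\le k\le n-1$), and then $\mathrm{leg}(w)=\{i_{k+1},\dots,i_n\}$. $\mathrm{supp}(w)=\{i_1,\dots,i_n\}$; $w$ is connected if $\mathrm{supp}(w)$ is a set of consecutive integers; $CRHW_n$ is the set of connected reverse hookwords of length $n$. If $w(\alpha)=\beta\ne0$, applying $\mathfrak t_{i_n},\dots,\mathfrak t_{i_1}$ successively adds one box at each step (the box added by $\mathfrak t_{i_m}$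 is in column $i_m$); $\tau_w$ is the filling of the set of added boxes in which the box added by $\mathfrak t_{i_m}$ has entry $m$. *)

theory Defs
  imports Main
begin

text \<open>Compositions are lists of positive naturals (part i = length of row i, rows
  numbered 1,2,... from top to bottom). The zero result is modelled by None.
  A word t_{i_1} ... t_{i_n} is the list [i_1, ..., i_n].\<close>

definition composition :: "nat list \<Rightarrow> bool" where
  "composition \<alpha> \<longleftrightarrow> (\<forall>x\<in>set \<alpha>. 0 < x)"

definition leftmost :: "nat list \<Rightarrow> nat \<Rightarrow> nat" where
  "leftmost \<alpha> a = (LEAST r. r < length \<alpha> \<and> \<alpha> ! r = a)"

definition t_op :: "nat \<Rightarrow> nat list \<Rightarrow> nat list option" where
  "t_op i \<alpha> =
     (if i = 0 then None
      else if i = 1 then Some (1 # \<alpha>)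
      else if i - 1 \<in> set \<alpha> then Some (\<alpha>[leftmost \<alpha> (i - 1) := i])
      else None)"

text \<open>w(alpha) = t_{i_1}( ... t_{i_n}(alpha)); t_i(0) = 0.\<close>
definition act :: "nat list \<Rightarrow> nat list \<Rightarrow> nat list option" where
  "act w \<alpha> = foldr (\<lambda>i x. Option.bind x (t_op i)) w (Some \<alpha>)"

text \<open>Reverse k-hookword: i_1 <= ... <= i_{k+1} > i_{k+2} > ... > i_n (0 <= k <= n-1).\<close>
definition is_rhook :: "nat list \<Rightarrow> nat \<Rightarrow> bool" where
  "is_rhook w k \<longleftrightarrow> k < length w \<and> sorted (take (Suc k) w) \<and> sorted_wrt (>) (drop k w)"

definition reverse_hookword :: "nat list \<Rightarrow> bool" where
  "reverse_hookword w \<longleftrightarrow> (\<exists>k. is_rhook w k)"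

definition leg :: "nat list \<Rightarrow> nat set" where
  "leg w = set (drop (THE k. is_rhook w k) w)"

definition supp :: "nat list \<Rightarrow> nat set" where
  "supp w = set w"

definition connected_word :: "nat list \<Rightarrow> bool" where
  "connected_word w \<longleftrightarrow> (\<exists>a b. supp w = {a..b})"

definition CRHW :: "nat \<Rightarrow> nat list set" where
  "CRHW n = {w. length w = n \<and> (\<forall>i\<in>set w. 1 \<le> i) \<and> reverse_hookword w \<and> connected_word w}"

text \<open>Fillings: partial maps from cells (row, column), both 1-based, to entries.
  For t_1 the new row is on top, so previously filled boxes move down one row.\<close>
type_synonym filling = "nat \<times> nat \<Rightarrow> nat option"

definition fill_step :: "nat \<Rightarrow> nat \<Rightarrow> nat list \<times> filling \<Rightarrow> (nat list \<times> filling) option" where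
  "fill_step i m st =
     (let \<alpha> = fst st; f = snd st in
      if i = 0 then None
      else if i = 1 then
        Some (1 # \<alpha>, \<lambda>(r, c). if r = 0 then None
                             else if r = 1 then (if c = 1 then Some m else None)
                             else f (r - 1, c))
      else if i - 1 \<in> set \<alpha> then
        Some (\<alpha>[leftmost \<alpha> (i - 1) := i], f((Suc (leftmost \<alpha> (i - 1)), i) := Some m))
      else None)"

text \<open>Apply t_{i_n}, then t_{i_{n-1}}, ..., then t_{i_1}; box added by t_{i_m} gets entry m.\<close>
definition fill_run :: "nat list \<Rightarrow> nat list \<Rightarrow> (nat list \<times> filling) option" where
  "fill_run w \<alpha> = foldr (\<lambda>m x. Option.bind x (fill_step (w ! (m - 1)) m))
                        [1..<Suc (length w)] (Some (\<alpha>, \<lambda>_. None))"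

definition tau :: "nat list \<Rightarrow> nat list \<Rightarrow> filling" where
  "tau w \<alpha> = (case fill_run w \<alpha> of Some (_, f) \<Rightarrow> f | None \<Rightarrow> (\<lambda>_. None))"

definition col_entries :: "filling \<Rightarrow> nat \<Rightarrow> nat set" where
  "col_entries \<tau> c = {e. \<exists>r. \<tau> (r, c) = Some e}"

end

theory Submission
  imports Defs
begin

lemma leftmost_props: "a \<in> set \<beta> \<Longrightarrow> leftmost \<beta> a < length \<beta> \<and> \<beta> ! leftmost \<beta> a = a"
  unfolding leftmost_def
  by (metis (mono_tags, lifting) LeastI in_set_conv_nth)

definition Inv :: "nat list \<Rightarrow> filling \<Rightarrow> bool" where
  "Inv \<beta> f \<longleftrightarrow> (\<forall>r c e. f (r,c) = Some e \<longrightarrow> 1 \<le> r \<and> r \<le> length \<beta> \<and> c \<le> \<beta> ! (r - 1))"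

lemma step_inv:
  assumes "fill_step i m (\<beta>, f) = Some (\<beta>', g)" "Inv \<beta> f"
  shows "Inv \<beta>' g \<and> (\<forall>c. col_entries g c = (if c = i then insert m (col_entries f c) else col_entries f c))"
proof (cases "i = 1")
  case True
  then have b: "\<beta>' = 1 # \<beta>" and g: "g = (\<lambda>(r, c). if r = 0 then None
                             else if r = 1 then (if c = 1 then Some m else None)
                             else f (r - 1, c))"
    using assms(1) by (auto simp: fill_step_def Let_def)
  have I: "Inv \<beta>' g"
    unfolding Inv_def
  proof (intro allI impI)
    fix r c e assume h: "g (r, c) = Some e"
    show "1 \<le> r \<and> r \<le> length \<beta>' \<and> c \<le> \<beta>' ! (r - 1)"
    proof (cases "r \<le> 1")
      case True with h show ?thesis by (auto simp: g b split: if_splits)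
    next
      case False
      then have "f (r - 1, c) = Some e" using h by (simp add: g)
      then have "1 \<le> r - 1 \<and> r - 1 \<le> length \<beta> \<and> c \<le> \<beta> ! (r - 1 - 1)"
        using assms(2) unfolding Inv_def by blast
      moreover have "(1 # \<beta>) ! (r - 1) = \<beta> ! (r - 1 - 1)"
        using False by (cases r) auto
      ultimately show ?thesis using False by (simp add: b) linarith
    qed
  qed
  have C: "col_entries g c = (if c = i then insert m (col_entries f c) else col_entries f c)" for c
  proof -
    have f0: "f (0, c') = None" for c'
      using assms(2) unfolding Inv_def by (metis not_one_le_zero option.exhaust)
    have "col_entries g c = (if c = 1 then {m} else {}) \<union> col_entries f c"
    proof (rule set_eqI)
      fix e
      show "e \<in> col_entries g c \<longleftrightarrow> e \<in> (if c = 1 then {m} else {}) \<union> col_entries f c"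
      proof
        assume "e \<in> col_entries g c"
        then obtain r where "g (r, c) = Some e" by (auto simp: col_entries_def)
        then show "e \<in> (if c = 1 then {m} else {}) \<union> col_entries f c"
          by (auto simp: g col_entries_def split: if_splits)
      next
        assume "e \<in> (if c = 1 then {m} else {}) \<union> col_entries f c"
        then consider "c = 1" "e = m" | r where "f (r, c) = Some e"
          by (auto simp: col_entries_def split: if_splits)
        then show "e \<in> col_entries g c"
        proof cases
          case 1 then have "g (1, c) = Some e" by (simp add: g)
          then show ?thesis by (auto simp: col_entries_def)
        next
          case (2 r)
          then have "r \<noteq> 0" using f0 by (cases r) auto
          then have "g (Suc r, c) = Some e" using 2 by (simp add: g)
          then show ?thesis by (auto simp: col_entries_def)
        qed
      qed
    qed
    then show ?thesis using True by auto
  qed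
  show ?thesis using I C by blast
next
  case False
  then have i2: "i \<noteq> 0" "i - 1 \<in> set \<beta>" using assms(1)
    by (auto simp: fill_step_def Let_def split: if_splits)
  define l where "l = leftmost \<beta> (i - 1)"
  have l: "l < length \<beta>" "\<beta> ! l = i - 1" using leftmost_props[OF i2(2)] l_def by auto
  have b: "\<beta>' = \<beta>[l := i]" and g: "g = f((Suc l, i) := Some m)"
    using assms(1) False i2 by (auto simp: fill_step_def Let_def l_def)
  have mono: "\<beta> ! x \<le> \<beta>[l := i] ! x" for x
    using l by (cases "x = l") auto
  have I: "Inv \<beta>' g"
    unfolding Inv_def
  proof (intro allI impI)
    fix r c e assume h: "g (r, c) = Some e"
    show "1 \<le> r \<and> r \<le> length \<beta>' \<and> c \<le> \<beta>' ! (r - 1)"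
    proof (cases "(r, c) = (Suc l, i)")
      case True then show ?thesis using l by (simp add: b)
    next
      case False
      then have "f (r, c) = Some e" using h by (auto simp: g split: if_splits)
      then have "1 \<le> r \<and> r \<le> length \<beta> \<and> c \<le> \<beta> ! (r - 1)"
        using assms(2) unfolding Inv_def by blast
      then show ?thesis using mono[of "r - 1"] by (simp add: b)
    qed
  qed
  have fresh: "f (Suc l, i) = None"
  proof (rule ccontr)
    assume "f (Suc l, i) \<noteq> None"
    then obtain e where "f (Suc l, i) = Some e" by auto
    then have "i \<le> \<beta> ! l" using assms(2) unfolding Inv_def by fastforce
    then show False using l i2 by simp
  qed
  have C: "col_entries g c = (if c = i then insert m (col_entries f c) else col_entries f c)" for c
  proof (rule set_eqI)
    fix e
    show "e \<in> col_entries g c \<longleftrightarrow> e \<in> (if c = i then insert m (col_entries f c) else col_entries f c)"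
    proof
      assume "e \<in> col_entries g c"
      then obtain r where "g (r, c) = Some e" by (auto simp: col_entries_def)
      then show "e \<in> (if c = i then insert m (col_entries f c) else col_entries f c)"
        by (cases "(r, c) = (Suc l, i)") (auto simp: g col_entries_def)
    next
      assume "e \<in> (if c = i then insert m (col_entries f c) else col_entries f c)"
      then consider "c = i" "e = m" | r where "f (r, c) = Some e"
        by (auto simp: col_entries_def split: if_splits)
      then show "e \<in> col_entries g c"
      proof cases
        case 1 then have "g (Suc l, c) = Some e" by (simp add: g)
        then show ?thesis by (auto simp: col_entries_def)
      next
        case (2 r)
        then have "(r, c) \<noteq> (Suc l, i)" using fresh by auto
        then have "g (r, c) = Some e" using 2 by (auto simp: g)
        then show ?thesis by (auto simp: col_entries_def)
      qed
    qed
  qed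
  show ?thesis using I C by blast
qed

lemma run_inv:
  "foldr (\<lambda>m x. Option.bind x (fill_step (w ! (m - 1)) m)) ms (Some (\<alpha>, \<lambda>_. None)) = Some (\<beta>, f)
   \<Longrightarrow> Inv \<beta> f \<and> (\<forall>c. col_entries f c = {m \<in> set ms. w ! (m - 1) = c})"
proof (induction ms arbitrary: \<beta> f)
  case Nil
  then show ?case by (auto simp: Inv_def col_entries_def)
next
  case (Cons m ms)
  then obtain v where v: "foldr (\<lambda>m x. Option.bind x (fill_step (w ! (m - 1)) m)) ms (Some (\<alpha>, \<lambda>_. None)) = Some v"
    "fill_step (w ! (m - 1)) m v = Some (\<beta>, f)"
    by (auto simp: bind_eq_Some_conv)
  obtain \<beta>0 f0 where v0: "v = (\<beta>0, f0)" by (cases v)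
  have IH: "Inv \<beta>0 f0 \<and> (\<forall>c. col_entries f0 c = {m \<in> set ms. w ! (m - 1) = c})"
    using Cons.IH v(1) v0 by blast
  from step_inv[OF v(2)[unfolded v0]] IH show ?case by auto
qed

lemma fst_step: "map_option fst (fill_step i m st) = t_op i (fst st)"
  by (cases st) (simp add: fill_step_def t_op_def Let_def)

lemma run_fst:
  "map_option fst (foldr (\<lambda>m x. Option.bind x (fill_step (w ! (m - 1)) m)) ms s)
   = foldr (\<lambda>i x. Option.bind x (t_op i)) (map (\<lambda>m. w ! (m - 1)) ms) (map_option fst s)"
proof (induction ms)
  case Nil then show ?case by simp
next
  case (Cons m ms)
  have bf: "map_option fst (Option.bind X (fill_step i m')) = Option.bind (map_option fst X) (t_op i)"
    for X :: "(nat list \<times> filling) option" and i m'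
    by (cases X) (simp_all add: fst_step)
  show ?case using Cons.IH by (simp add: bf)
qed

lemma map_upt_w: "map (\<lambda>m. w ! (m - 1)) [1..<Suc (length w)] = w"
  by (rule nth_equalityI) (simp_all del: upt_Suc)

lemma col_tau:
  assumes "act w \<alpha> = Some \<beta>"
  shows "col_entries (tau w \<alpha>) c = {m. 0 < m \<and> m \<le> length w \<and> w ! (m - 1) = c}"
proof -
  have "map_option fst (fill_run w \<alpha>) = Some \<beta>"
    using assms unfolding fill_run_def act_def run_fst map_upt_w by simp
  then obtain f where fr: "fill_run w \<alpha> = Some (\<beta>, f)" by auto
  then have "col_entries f c = {m \<in> set [1..<Suc (length w)]. w ! (m - 1) = c}"
    using run_inv unfolding fill_run_def by blast
  moreover have "tau w \<alpha> = f" using fr by (simp add: tau_def)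
  ultimately show ?thesis by auto
qed

lemma S1: "is_rhook w k \<Longrightarrow> a \<le> b \<Longrightarrow> b \<le> k \<Longrightarrow> w ! a \<le> w ! b"
  unfolding is_rhook_def
  using sorted_nth_mono[of "take (Suc k) w" a b] by auto

lemma S2: "is_rhook w k \<Longrightarrow> k \<le> a \<Longrightarrow> a < b \<Longrightarrow> b < length w \<Longrightarrow> w ! b < w ! a"
  unfolding is_rhook_def
  using sorted_wrt_nth_less[of "(>)" "drop k w" "a - k" "b - k"] by auto

lemma rhook_unique: "is_rhook w k \<Longrightarrow> is_rhook w k' \<Longrightarrow> k = k'"
proof (rule ccontr)
  assume h: "is_rhook w k" "is_rhook w k'" "k \<noteq> k'"
  have aux: "is_rhook w a \<Longrightarrow> is_rhook w b \<Longrightarrow> a < b \<Longrightarrow> False" for a b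
    using S1[of w b a "Suc a"] S2[of w a a "Suc a"] unfolding is_rhook_def by auto
  show False using h aux[of k k'] aux[of k' k] by (cases "k < k'") auto
qed

theorem mainTheorem9:
  fixes \<alpha> \<beta> w :: "nat list" and n j :: nat
  assumes "composition \<alpha>"
    and "w \<in> CRHW n"
    and "act w \<alpha> = Some \<beta>"
    and "1 \<le> j" and "j \<in> supp w" and "j \<noteq> Max (supp w)"
    and "j \<in> leg w"
  shows "Max (col_entries (tau w \<alpha>) (j + 1)) < Max (col_entries (tau w \<alpha>) j)
     \<and> (\<forall>e \<in> col_entries (tau w \<alpha>) j. e \<noteq> Max (col_entries (tau w \<alpha>) j)
            \<longrightarrow> e < Min (col_entries (tau w \<alpha>) (j + 1)))"
proof -
  let ?C = "\<lambda>c. col_entries (tau w \<alpha>) c"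
  have Ceq: "?C c = {m. 0 < m \<and> m \<le> length w \<and> w ! (m - 1) = c}" for c
    using col_tau[OF assms(3)] .
  have fin: "finite (?C c)" for c
    unfolding Ceq by (rule finite_subset[of _ "{..length w}"]) auto
  from assms(2) obtain k where k: "is_rhook w k" "connected_word w"
    by (auto simp: CRHW_def reverse_hookword_def)
  have "(THE k. is_rhook w k) = k" using k(1) rhook_unique by blast
  then have "j \<in> set (drop k w)" using assms(7) by (simp add: leg_def)
  then obtain i where i: "i < length (drop k w)" "drop k w ! i = j"
    by (auto simp: in_set_conv_nth)
  define p where "p = k + i"
  have p: "k \<le> p" "p < length w" "w ! p = j"
    using i k(1) unfolding p_def is_rhook_def by auto
  from k(2) obtain a b where ab: "supp w = {a..b}" by (auto simp: connected_word_def)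
  have jab: "a \<le> j" "j \<le> b" using assms(5) ab by auto
  have "Max {a..b} = b" by (rule Max_eqI) (use jab in auto)
  then have "j \<noteq> b" using assms(6) ab by simp
  then have "j + 1 \<in> supp w" using jab ab by auto
  then obtain q0 where q0: "q0 < length w" "w ! q0 = j + 1"
    by (auto simp: supp_def in_set_conv_nth)
  have A: "q < p" if "q < length w" "w ! q = j + 1" for q
  proof (rule ccontr)
    assume "\<not> q < p"
    then consider "q = p" | "p < q" by linarith
    then show False
    proof cases
      case 1 then show False using that p by simp
    next
      case 2 then show False using S2[OF k(1) p(1) 2 that(1)] that p by simp
    qed
  qed
  have pmax: "p' \<le> p" if "p' < length w" "w ! p' = j" for p'
  proof (rule ccontr)
    assume "\<not> p' \<le> p"
    then have "p < p'" by simp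
    then show False using S2[OF k(1) p(1) \<open>p < p'\<close> that(1)] that p by simp
  qed
  have B: "p' < q" if "p' < p" "w ! p' = j" "q < length w" "w ! q = j + 1" for p' q
  proof (rule ccontr)
    assume "\<not> p' < q"
    moreover have "q \<noteq> p'" using that by auto
    ultimately have "q < p'" by simp
    show False
    proof (cases "p' \<le> k")
      case True then show False using S1[OF k(1), of q p'] \<open>q < p'\<close> that by simp
    next
      case False then show False using S2[OF k(1), of p' p] that p by simp
    qed
  qed
  have Mj: "Max (?C j) = Suc p"
  proof (rule Max_eqI[OF fin])
    fix y assume "y \<in> ?C j"
    then have "0 < y" "y \<le> length w" "w ! (y - 1) = j" by (auto simp: Ceq)
    then have "y - 1 \<le> p" using pmax[of "y - 1"] by simp
    then show "y \<le> Suc p" by simp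
  next
    show "Suc p \<in> ?C j" using p by (simp add: Ceq)
  qed
  have ne1: "?C (j + 1) \<noteq> {}" using q0 by (auto simp: Ceq intro!: exI[of _ "Suc q0"])
  have M1: "Max (?C (j+1)) \<in> ?C (j+1)" using Max_in[OF fin ne1] .
  have m1: "Min (?C (j+1)) \<in> ?C (j+1)" using Min_in[OF fin ne1] .
  have part1: "Max (?C (j + 1)) < Max (?C j)"
  proof -
    obtain m where "m = Max (?C (j+1))" by simp
    then have "0 < m" "m \<le> length w" "w ! (m - 1) = j + 1" using M1 by (auto simp: Ceq)
    then have "m - 1 < p" using A by auto
    then show ?thesis using Mj \<open>m = _\<close> by simp
  qed
  have part2: "\<forall>e \<in> ?C j. e \<noteq> Max (?C j) \<longrightarrow> e < Min (?C (j + 1))"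
  proof (intro ballI impI)
    fix e assume e: "e \<in> ?C j" "e \<noteq> Max (?C j)"
    then have e': "0 < e" "e \<le> length w" "w ! (e - 1) = j" by (auto simp: Ceq)
    then have "e - 1 \<le> p" using pmax by auto
    moreover have "e - 1 \<noteq> p" using e(2) Mj e'(1) by auto
    ultimately have lt: "e - 1 < p" by simp
    obtain m where mm: "m = Min (?C (j+1))" by simp
    then have "0 < m" "m \<le> length w" "w ! (m - 1) = j + 1" using m1 by (auto simp: Ceq)
    then have "e - 1 < m - 1" using B[OF lt e'(3)] by auto
    then show "e < Min (?C (j + 1))" using mm by simp
  qed
  show ?thesis using part1 part2 by blast
qed

end
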